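(* Let $f:\mathbb{N}\to\mathbb{R}$ with $f(1)=1$ be multiplicative (i.e. $f(mn)=f(m)f(n)$ for coprime $m,n$). Assume there exist $A>0$ and $c\in(0,1)$ such that $|f(n)|\leq Ac^n$ for all $n\geq2$. Then $|f^{-1}(n)| \leq n^{\frac{3\ln c}{\ln 3}+\frac{\ln(1+A)}{\ln 2}}$ for all $n\geq2$.
   Context: $f^{-1}$ denotes the Dirichlet inverse of $f$: the arithmetic function with $\sum_{d\mid n} f(n/d) f^{-1}(d)=\varepsilon(n)$ for all $n$, where $\varepsilon(1)=1$ and $\varepsilon(n)=0$ for $n\ge2$. *)

theory Defs
  imports "HOL-Analysis.Analysis"
begin

definition multiplicative_fun :: "(nat \<Rightarrow> real) \<Rightarrow> bool" where
  "multiplicative_fun f \<longleftrightarrow>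
     f 1 = 1 \<and> (\<forall>m n. m > 0 \<longrightarrow> n > 0 \<longrightarrow> coprime m n \<longrightarrow> f (m * n) = f m * f n)"

(* Values at 0 are normalised to 0 so that the function is uniquely determined. *)
definition dirichlet_inverse :: "(nat \<Rightarrow> real) \<Rightarrow> nat \<Rightarrow> real" where
  "dirichlet_inverse f = (THE g. g 0 = 0 \<and>
     (\<forall>n>0. (\<Sum>d | d dvd n. f (n div d) * g d) = (if n = 1 then 1 else 0)))"

end

theory Submission imports Defs "HOL-Computational_Algebra.Primes" begin

function ginv :: "(nat \<Rightarrow> real) \<Rightarrow> nat \<Rightarrow> real" where
  "ginv f n = (if n = 0 then 0 else if n = 1 then 1 else
     - (\<Sum>d \<in> {d. d dvd n \<and> d < n}. f (n div d) * ginv f d))"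
  by auto
termination by (relation "Wellfounded.measure (\<lambda>(f,n). n)") auto

declare ginv.simps [simp del]

lemma divs_split:
  assumes "n > (0::nat)"
  shows "{d. d dvd n} = insert n {d. d dvd n \<and> d < n}" "n \<notin> {d. d dvd n \<and> d < n}"
    "finite {d. d dvd n \<and> d < n}"
  using assms by (auto dest: dvd_imp_le)

lemma sum_divs_split:
  assumes "n > (0::nat)"
  shows "(\<Sum>d | d dvd n. F d) = F n + (\<Sum>d \<in> {d. d dvd n \<and> d < n}. F d)"
  by (subst divs_split(1)[OF assms], subst sum.insert) (use divs_split assms in auto)

lemma ginv_rec:
  assumes "n > 1"
  shows "ginv f n = - (\<Sum>d \<in> {d. d dvd n \<and> d < n}. f (n div d) * ginv f d)"
  by (rule trans[OF ginv.simps]) (use assms in simp)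

lemma ginv_spec:
  assumes "f 1 = 1" "n > 0"
  shows "(\<Sum>d | d dvd n. f (n div d) * ginv f d) = (if n = 1 then 1 else 0)"
proof -
  have "(\<Sum>d | d dvd n. f (n div d) * ginv f d)
      = ginv f n + (\<Sum>d \<in> {d. d dvd n \<and> d < n}. f (n div d) * ginv f d)"
    using sum_divs_split[OF assms(2), of "\<lambda>d. f (n div d) * ginv f d"] assms by simp
  moreover have "{d. d dvd 1 \<and> d < (1::nat)} = {}" by auto
  moreover have "ginv f n = (if n = 1 then 1 else
     - (\<Sum>d \<in> {d. d dvd n \<and> d < n}. f (n div d) * ginv f d))"
    by (rule trans[OF ginv.simps]) (use assms in simp)
  ultimately show ?thesis using assms by auto
qed

lemma ginv_unique:
  assumes "f 1 = 1" "g 0 = 0"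
    "\<forall>n>0. (\<Sum>d | d dvd n. f (n div d) * g d) = (if n = 1 then 1 else 0)"
  shows "g n = ginv f n"
proof (induction n rule: less_induct)
  case (less n)
  show ?case
  proof (cases "n = 0")
    case True then show ?thesis using assms by (simp add: ginv.simps)
  next
    case False
    then have n: "n > 0" by simp
    have s: "(\<Sum>d \<in> {d. d dvd n \<and> d < n}. f (n div d) * g d)
        = (\<Sum>d \<in> {d. d dvd n \<and> d < n}. f (n div d) * ginv f d)"
      using less by (intro sum.cong) auto
    have "(\<Sum>d | d dvd n. f (n div d) * g d)
      = g n + (\<Sum>d \<in> {d. d dvd n \<and> d < n}. f (n div d) * g d)"
      using sum_divs_split[OF n, of "\<lambda>d. f (n div d) * g d"] assms n by simp
    moreover have "(\<Sum>d | d dvd n. f (n div d) * ginv f d)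
      = ginv f n + (\<Sum>d \<in> {d. d dvd n \<and> d < n}. f (n div d) * ginv f d)"
      using sum_divs_split[OF n, of "\<lambda>d. f (n div d) * ginv f d"] assms n by simp
    moreover have "(\<Sum>d | d dvd n. f (n div d) * ginv f d) = (if n = 1 then 1 else 0)"
      using ginv_spec[of f n] assms(1) n by simp
    moreover have "(\<Sum>d | d dvd n. f (n div d) * g d) = (if n = 1 then 1 else 0)"
      using assms(3) n by simp
    ultimately show ?thesis using s by linarith
  qed
qed

lemma dinv_eq:
  assumes "f 1 = 1"
  shows "dirichlet_inverse f = ginv f"
  unfolding dirichlet_inverse_def
proof (rule the_equality)
  show "ginv f 0 = 0 \<and> (\<forall>n>0. (\<Sum>d | d dvd n. f (n div d) * ginv f d) = (if n = 1 then 1 else 0))"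
    using ginv_spec[of f] assms by (simp add: ginv.simps)
next
  fix g assume "g 0 = 0 \<and> (\<forall>n>0. (\<Sum>d | d dvd n. f (n div d) * g d) = (if n = 1 then 1 else 0))"
  then show "g = ginv f" using ginv_unique[of f g] assms by blast
qed

lemma gcd_aux: "coprime (m::nat) n \<Longrightarrow> a dvd m \<Longrightarrow> b dvd n \<Longrightarrow> gcd (a*b) m = a"
  by (metis coprime_divisors dvd_refl gcd_mult_left_right_cancel gcd_nat.orderE)

lemma gcd_aux2: "coprime (m::nat) n \<Longrightarrow> a dvd m \<Longrightarrow> b dvd n \<Longrightarrow> gcd (a*b) n = b"
  using gcd_aux[of n m b a] by (metis coprime_commute mult.commute)

lemma sum_divisors_coprime:
  fixes F :: "nat \<Rightarrow> real"
  assumes "coprime m n"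
  shows "(\<Sum>d | d dvd m * n. F d) = (\<Sum>(a,b) \<in> {a. a dvd m} \<times> {b. b dvd n}. F (a*b))"
proof (rule sum.reindex_bij_witness[of _ "\<lambda>(a,b). a*b" "\<lambda>d. (gcd d m, gcd d n)"])
  fix d assume "d \<in> {d. d dvd m * n}"
  then obtain a b where ab: "d = a*b" "a dvd m" "b dvd n" by (auto elim: dvd_productE)
  show "(case (gcd d m, gcd d n) of (a, b) \<Rightarrow> a * b) = d"
    "(gcd d m, gcd d n) \<in> {a. a dvd m} \<times> {b. b dvd n}"
    "(case (gcd d m, gcd d n) of (a, b) \<Rightarrow> F (a * b)) = F d"
    using ab gcd_aux[OF assms ab(2,3)] gcd_aux2[OF assms ab(2,3)] by auto
next
  fix ab assume "ab \<in> {a. a dvd m} \<times> {b. b dvd n}"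
  then obtain a b where ab: "ab = (a,b)" "a dvd m" "b dvd n" by auto
  show "(gcd (case ab of (a, b) \<Rightarrow> a * b) m, gcd (case ab of (a, b) \<Rightarrow> a * b) n) = ab"
    "(case ab of (a, b) \<Rightarrow> a * b) \<in> {d. d dvd m * n}"
    using ab gcd_aux[OF assms ab(2,3)] gcd_aux2[OF assms ab(2,3)] by (auto simp: mult_dvd_mono)
qed

lemma ginv_mult:
  assumes f1: "f 1 = 1"
    and fm: "\<And>m n. m > 0 \<Longrightarrow> n > 0 \<Longrightarrow> coprime m n \<Longrightarrow> f (m * n) = f m * f n"
  shows "m > 0 \<Longrightarrow> n > 0 \<Longrightarrow> coprime m n \<Longrightarrow> ginv f (m * n) = ginv f m * ginv f n"
proof (induction "m * n" arbitrary: m n rule: less_induct)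
  case less
  have g1: "ginv f 1 = 1" by (simp add: ginv.simps)
  show ?case
  proof (cases "m = 1 \<or> n = 1")
    case True then show ?thesis using g1 by auto
  next
    case False
    with less.prems have m1: "m > 1" and n1: "n > 1" by auto
    let ?g = "ginv f"
    let ?P = "{a. a dvd m} \<times> {b. b dvd n}"
    define H where "H = (\<lambda>(a,b). f (m div a) * f (n div b) * ?g (a*b))"
    define K where "K = (\<lambda>(a,b). f (m div a) * f (n div b) * (?g a * ?g b))"
    have finP: "finite ?P" using less.prems by auto
    have mnP: "(m,n) \<in> ?P" by auto
    have HK: "H x = K x" if x: "x \<in> ?P - {(m,n)}" for x
    proof -
      obtain a b where ab: "x = (a,b)" "a dvd m" "b dvd n" "(a,b) \<noteq> (m,n)" using x by auto
      have a0: "a > 0" "b > 0" using ab less.prems by (auto intro: Nat.gr0I)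
      have "a \<le> m" "b \<le> n" using ab less.prems by (auto dest: dvd_imp_le)
      moreover have "a < m \<or> b < n" using ab \<open>a \<le> m\<close> \<open>b \<le> n\<close> by auto
      ultimately have "a * b < m * n" using a0 less.prems
        by (auto intro: mult_le_less_imp_less mult_less_le_imp_less)
      moreover have "coprime a b" using ab less.prems coprime_divisors by blast
      ultimately have "?g (a*b) = ?g a * ?g b" using less.hyps a0 by blast
      then show ?thesis using ab by (simp add: H_def K_def)
    qed
    have sumHK: "sum H (?P - {(m,n)}) = sum K (?P - {(m,n)})"
      by (rule sum.cong) (use HK in auto)
    have e1: "sum H ?P = H (m,n) + sum H (?P - {(m,n)})"
      using finP mnP by (simp add: sum.remove)
    have e2: "sum K ?P = K (m,n) + sum K (?P - {(m,n)})"
      using finP mnP by (simp add: sum.remove)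
    have e3: "H (m,n) = ?g (m*n)" using less.prems f1 by (simp add: H_def)
    have e4: "K (m,n) = ?g m * ?g n" using less.prems f1 by (simp add: K_def)
    have e5: "sum K ?P = (\<Sum>a | a dvd m. f (m div a) * ?g a) * (\<Sum>b | b dvd n. f (n div b) * ?g b)"
    proof -
      have "(\<Sum>a | a dvd m. f (m div a) * ?g a) * (\<Sum>b | b dvd n. f (n div b) * ?g b)
          = (\<Sum>a | a dvd m. \<Sum>b | b dvd n. (f (m div a) * ?g a) * (f (n div b) * ?g b))"
        by (rule sum_product)
      also have "\<dots> = (\<Sum>(a,b)\<in>?P. (f (m div a) * ?g a) * (f (n div b) * ?g b))"
        by (rule sum.cartesian_product)
      also have "\<dots> = sum K ?P" unfolding K_def
        by (intro sum.cong refl) (auto simp: mult_ac)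
      finally show ?thesis by simp
    qed
    have e6: "(\<Sum>a | a dvd m. f (m div a) * ?g a) = 0" using ginv_spec[of f m] f1 m1 by simp
    have e7: "sum H ?P = (\<Sum>d | d dvd m * n. f (m * n div d) * ?g d)"
    proof -
      have "(\<Sum>d | d dvd m * n. f (m * n div d) * ?g d) = (\<Sum>(a,b) \<in> ?P. f (m * n div (a*b)) * ?g (a*b))"
        using sum_divisors_coprime[OF less.prems(3)] by simp
      also have "\<dots> = sum H ?P"
      proof (rule sum.cong)
        fix x assume "x \<in> ?P"
        then obtain a b where ab: "x = (a,b)" "a dvd m" "b dvd n" by auto
        have a0: "a > 0" "b > 0" using ab less.prems by (auto intro: Nat.gr0I)
        have e: "m * n div (a*b) = (m div a) * (n div b)" using ab by (metis div_mult_div_if_dvd)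
        have "coprime (m div a) (n div b)"
          by (rule coprime_divisors[OF _ _ less.prems(3)]) (use ab in \<open>metis dvd_mult_div_cancel dvd_triv_right\<close>)+
        moreover have "m div a > 0" "n div b > 0" using ab a0 less.prems
          by (auto elim!: dvdE)
        ultimately show "(case x of (a,b) \<Rightarrow> f (m * n div (a*b)) * ?g (a*b)) = H x"
          using ab e fm by (simp add: H_def)
      qed simp
      finally show ?thesis by simp
    qed
    have e8: "(\<Sum>d | d dvd m * n. f (m * n div d) * ?g d) = 0"
      using ginv_spec[of f "m*n"] f1 m1 n1 by simp
    have "sum K ?P = 0" using e5 e6 by simp
    then show ?thesis using sumHK e1 e2 e3 e4 e7 e8 by linarith
  qed
qed


lemma step3: "(p::nat) \<ge> 3 \<Longrightarrow> (p+1)^3 \<le> 3 * p^3"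
proof -
  assume p: "p \<ge> 3"
  have a: "3*p^2 \<le> p^3" using p by (simp add: power2_eq_square power3_eq_cube)
  have b: "3*p \<le> p^2" using p by (simp add: power2_eq_square)
  have c: "1 \<le> p^2" using p by simp
  have "(p+1)^3 = p^3 + 3*p^2 + 3*p + 1" by (simp add: power2_eq_square power3_eq_cube algebra_simps)
  also have "\<dots> \<le> 3 * p^3" using a b c by linarith
  finally show ?thesis .
qed

lemma pow3: "(p::nat)^3 \<le> 3^p"
proof (cases "p \<ge> 3")
  case True
  then show ?thesis
  proof (induction p rule: nat_induct_at_least)
    case base then show ?case by simp
  next
    case (Suc p)
    have "(Suc p)^3 \<le> 3 * p^3" using step3[OF Suc.hyps(1)] by simp
    also have "\<dots> \<le> 3 * 3^p" using Suc.IH by simp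
    finally show ?case by simp
  qed
next
  case False
  then have "p = 0 \<or> p = 1 \<or> p = 2" by auto
  then show ?thesis by auto
qed

lemma jp_le: "(p::nat) \<ge> 2 \<Longrightarrow> j * p \<le> p ^ j"
proof (cases j)
  case 0 then show ?thesis by simp
next
  case (Suc i)
  assume p: "p \<ge> 2"
  have "Suc i \<le> 2 ^ i" using less_exp[of i] by (cases i) auto
  also have "\<dots> \<le> p ^ i" using p by (simp add: power_mono)
  finally have "Suc i * p \<le> p ^ i * p" by (rule mult_le_mono1)
  then show ?thesis using Suc by (simp add: mult.commute)
qed

lemma geo: "(A::real) * (\<Sum>i<k. (1+A)^i) = (1+A)^k - 1"
  by (induction k) (auto simp: algebra_simps)

lemma pp_divs:
  assumes "prime (p::nat)"
  shows "{d. d dvd p^k \<and> d < p^k} = (\<lambda>i. p^i) ` {..<k}"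
proof -
  have p1: "p > 1" using assms prime_gt_1_nat by blast
  show ?thesis
    using assms p1 by (auto simp: divides_primepow_nat power_strict_increasing_iff)
qed

lemma ginv_pp:
  assumes f1: "f 1 = 1" and A: "A > 0" and c: "0 < c" "c < 1"
    and fb: "\<And>n. n \<ge> 2 \<Longrightarrow> \<bar>f n\<bar> \<le> A * c ^ n"
    and p: "prime p"
  shows "\<bar>ginv f (p^k)\<bar> \<le> (1+A)^k * c^(k*p)"
proof (induction k rule: less_induct)
  case (less k)
  have p1: "p > 1" using p prime_gt_1_nat by blast
  show ?case
  proof (cases "k = 0")
    case True then show ?thesis by (simp add: ginv.simps)
  next
    case False
    have pk: "p^k > 1" using p1 False by (intro one_less_power) auto
    have inj: "inj_on (\<lambda>i. p^i) {..<k}" using p1 by (auto intro!: inj_onI simp: power_inject_exp)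
    have "ginv f (p^k) = - (\<Sum>d \<in> {d. d dvd p^k \<and> d < p^k}. f (p^k div d) * ginv f d)"
      using ginv_rec[OF pk] .
    also have "\<dots> = - (\<Sum>i<k. f (p^k div p^i) * ginv f (p^i))"
      unfolding pp_divs[OF p] by (subst sum.reindex[OF inj]) simp
    finally have "\<bar>ginv f (p^k)\<bar> \<le> (\<Sum>i<k. \<bar>f (p^k div p^i)\<bar> * \<bar>ginv f (p^i)\<bar>)"
      by (simp add: sum_abs[THEN order_trans] abs_mult order_trans[OF sum_abs] del: sum.lessThan_Suc)
    also have "\<dots> \<le> (\<Sum>i<k. (A * c^((k-i)*p)) * ((1+A)^i * c^(i*p)))"
    proof (rule sum_mono)
      fix i assume i: "i \<in> {..<k}"
      have e: "p^k div p^i = p^(k-i)" using i p1 by (simp add: power_diff)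
      have "p \<le> p^(k-i)" using i p1 by (intro self_le_power) auto
      then have "p^(k-i) \<ge> 2" using p1 by linarith
      then have "\<bar>f (p^k div p^i)\<bar> \<le> A * c^(p^(k-i))" using fb e by simp
      also have "\<dots> \<le> A * c^((k-i)*p)"
        using jp_le[of p "k-i"] p1 c A by (auto intro!: mult_left_mono power_decreasing)
      finally have 1: "\<bar>f (p^k div p^i)\<bar> \<le> A * c^((k-i)*p)" .
      have 2: "\<bar>ginv f (p^i)\<bar> \<le> (1+A)^i * c^(i*p)" using less i by simp
      show "\<bar>f (p^k div p^i)\<bar> * \<bar>ginv f (p^i)\<bar> \<le> (A * c^((k-i)*p)) * ((1+A)^i * c^(i*p))"
        by (rule mult_mono[OF 1 2]) (use A c in auto)
    qed
    also have "\<dots> = (\<Sum>i<k. c^(k*p) * (A * (1+A)^i))"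
    proof (rule sum.cong)
      fix i assume "i \<in> {..<k}"
      then have ki: "(k-i) + i = k" by simp
      have "(k-i)*p + i*p = ((k-i) + i)*p" by (simp only: add_mult_distrib)
      then have "(k-i)*p + i*p = k*p" using ki by simp
      then have "c^((k-i)*p) * c^(i*p) = c^(k*p)" by (metis power_add)
      then show "(A * c^((k-i)*p)) * ((1+A)^i * c^(i*p)) = c^(k*p) * (A * (1+A)^i)"
        by (metis (no_types, lifting) mult.assoc mult.commute)
    qed simp
    also have "\<dots> = c^(k*p) * ((1+A)^k - 1)"
      by (simp add: sum_distrib_left[symmetric] geo)
    also have "\<dots> \<le> c^(k*p) * (1+A)^k" using c by (simp add: mult_left_mono)
    finally show ?thesis by (simp add: mult.commute)
  qed
qed

lemma key_ineq:
  fixes A c :: real and p :: nat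
  assumes p: "p \<ge> 2" and A: "A > 0" and c: "0 < c" "c < 1"
  shows "(1+A) * c^p \<le> real p powr (3 * ln c / ln 3 + ln (1 + A) / ln 2)"
proof -
  have pr: "real p > 0" using p by simp
  have l3: "3 * ln (real p) \<le> real p * ln 3"
  proof -
    have "real (p^3) \<le> real (3^p)" using pow3[of p] by (simp only: of_nat_le_iff)
    then have "ln (real p ^ 3) \<le> ln (3 ^ p)" using pr by simp
    then show ?thesis using pr by (simp add: ln_realpow)
  qed
  have lc: "ln c < 0" using c by simp
  have ln3: "ln (3::real) > 0" by simp
  have q: "3 * ln (real p) / ln 3 \<le> real p" using l3 ln3 by (simp add: divide_le_eq)
  have "real p * ln c \<le> (3 * ln (real p) / ln 3) * ln c"
    using mult_right_mono_neg[OF q, of "ln c"] lc by simp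
  then have "exp (real p * ln c) \<le> exp ((3 * ln c / ln 3) * ln (real p))"
    by (simp add: algebra_simps)
  moreover have "c^p = exp (real p * ln c)" using c by (simp add: exp_ln ln_realpow[symmetric])
  ultimately have 1: "c^p \<le> real p powr (3 * ln c / ln 3)" using pr by (simp add: powr_def)
  have ln2: "ln (2::real) > 0" by simp
  have "ln 2 \<le> ln (real p)" using p by simp
  then have r: "1 \<le> ln (real p) / ln 2" using ln2 by simp
  have la: "ln (1+A) > 0" using A by simp
  have "ln (1+A) \<le> (ln (1 + A) / ln 2) * ln (real p)"
    using mult_left_mono[OF r, of "ln (1+A)"] la by (simp add: field_simps)
  then have "exp (ln (1+A)) \<le> exp ((ln (1 + A) / ln 2) * ln (real p))" by simp
  then have 2: "1 + A \<le> real p powr (ln (1 + A) / ln 2)" using A pr by (simp add: powr_def)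
  have "(1+A) * c^p \<le> real p powr (ln (1 + A) / ln 2) * real p powr (3 * ln c / ln 3)"
    by (rule mult_mono[OF 2 1]) (use A c in auto)
  then show ?thesis by (simp add: powr_add mult.commute)
qed


theorem corollary3p7:
  fixes f :: "nat \<Rightarrow> real" and A c :: real
  assumes "multiplicative_fun f"
    and "A > 0" and "0 < c" and "c < 1"
    and "\<And>n. n \<ge> 2 \<Longrightarrow> \<bar>f n\<bar> \<le> A * c ^ n"
  shows "\<forall>n\<ge>2. \<bar>dirichlet_inverse f n\<bar>
           \<le> real n powr (3 * ln c / ln 3 + ln (1 + A) / ln 2)"
proof -
  define \<alpha> where "\<alpha> = 3 * ln c / ln 3 + ln (1 + A) / ln 2"
  have f1: "f 1 = 1" and fm: "\<And>m n. m > 0 \<Longrightarrow> n > 0 \<Longrightarrow> coprime m n \<Longrightarrow> f (m * n) = f m * f n"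
    using assms(1) unfolding multiplicative_fun_def by auto
  have gm: "\<And>m n. m > 0 \<Longrightarrow> n > 0 \<Longrightarrow> coprime m n \<Longrightarrow> ginv f (m * n) = ginv f m * ginv f n"
    using ginv_mult[of f] f1 fm by blast
  have ppb: "\<bar>ginv f (p^k)\<bar> \<le> real (p^k) powr \<alpha>" if p: "prime p" for p k
  proof -
    have p2: "p \<ge> 2" using p prime_ge_2_nat by blast
    have "\<bar>ginv f (p^k)\<bar> \<le> (1+A)^k * c^(k*p)"
      using ginv_pp[OF f1 assms(2,3,4,5) p] .
    also have "\<dots> = ((1+A) * c^p)^k" by (simp add: power_mult_distrib mult.commute[of k p] power_mult)
    also have "\<dots> \<le> (real p powr \<alpha>)^k"
      using key_ineq[OF p2 assms(2,3,4)] assms(2,3) unfolding \<alpha>_def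
      by (intro power_mono) auto
    also have "\<dots> = real (p^k) powr \<alpha>"
      using p2 by (simp add: powr_power powr_realpow[symmetric] powr_powr mult.commute)
    finally show ?thesis .
  qed
  have main: "n > 0 \<Longrightarrow> \<bar>ginv f n\<bar> \<le> real n powr \<alpha>" for n
  proof (induction n rule: less_induct)
    case (less n)
    show ?case
    proof (cases "n = 1")
      case True then show ?thesis by (simp add: ginv.simps)
    next
      case False
      then obtain p where p: "prime p" "p dvd n" using prime_factor_nat by blast
      define e where "e = multiplicity p n"
      obtain k where k: "n = p^e * k" "\<not> p dvd k"
      proof -
        have nu: "\<not> is_unit p" using p(1) not_prime_unit by blast
        have n0: "n \<noteq> 0" using less.prems by simp
        show ?thesis using multiplicity_decompose'[OF n0 nu] that unfolding e_def by blast
      qed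
      have e0: "e > 0" unfolding e_def using p less.prems
        by (subst multiplicity_gt_zero_iff) auto
      have p1: "p > 1" using p prime_gt_1_nat by blast
      have pe: "p^e > 1" using p1 e0 by (intro one_less_power) auto
      have k0: "k > 0" using k less.prems by (auto intro: Nat.gr0I)
      show ?thesis
      proof (cases "k = 1")
        case True then show ?thesis using ppb[OF p(1), of e] k by simp
      next
        case False
        then have k1: "k > 1" using k0 by simp
        have cop: "coprime (p^e) k" using prime_imp_coprime[OF p(1) k(2)] by simp
        have lt1: "p^e < n" using k k1 pe p1 by simp
        have lt2: "k < n" using k k1 pe p1 by simp
        have h1: "\<bar>ginv f (p^e)\<bar> \<le> real (p^e) powr \<alpha>"
          using less.IH[OF lt1] pe p1 by simp
        have h2: "\<bar>ginv f k\<bar> \<le> real k powr \<alpha>"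
          using less.IH[OF lt2] k0 by simp
        have "\<bar>ginv f n\<bar> = \<bar>ginv f (p^e)\<bar> * \<bar>ginv f k\<bar>"
          using gm[OF _ k0 cop] pe k p1 by (simp add: abs_mult)
        also have "\<dots> \<le> real (p^e) powr \<alpha> * real k powr \<alpha>"
          by (rule mult_mono[OF h1 h2]) auto
        also have "\<dots> = real n powr \<alpha>" using k by (simp add: powr_mult)
        finally show ?thesis .
      qed
    qed
  qed
  show ?thesis using main dinv_eq[of f, OF f1] unfolding \<alpha>_def by auto
qed

end
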